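(* For Pólya trees $t$ let $S_t$, $T$ be as in the context. Then \[ \sum_{\substack{t \in \mathcal{P}_{\le n}\\ |t| \ge \log n}} \left(1 - \frac{[z^n]S_t(z)}{[z^n]T(z)}\right) = \mathcal{O}\!\left(\frac{n}{\log n}\right) \quad \text{as } n\to\infty, \] where $\log$ denotes the logarithm to base $1/\sigma$.
   Context: A recursive tree of size $n$ is a rooted non-plane tree with $n$ nodes labeled $1,\dots,n$ with labels increasing along every path from the root; their exponential generating function is $T(z)=\ln\frac{1}{1-z}$, so $[z^n]T(z)=1/n$. A Pólya tree is an unlabeled rooted non-plane tree; $\mathcal{P}_{\le n}$ is the set of Pólya trees with at most $n$ nodes; $\sigma\approx 0.338$ is the radius of convergence of the ordinary generating function of Pólya trees. A fringe subtree is a node together with all its descendants; its shape is the Pólya tree obtained by forgetting labels. For a Pólya tree $t$ with $k$ nodes, $\ell(t)$ is the number of increasing labelings of $t$ by $1,\dots,k$, $w(t)=\ell(t)/k!$ and $P_t(z)=w(t)z^k$. $S_t(z)$ is the exponential generating function of recursive trees having no fringe subtree of shape $t$; it is the solution of $S_t'(z)=\exp(S_t(z))-P_t'(z)$, $S_t(0)=0$, explicitly $S_t(z)=\ln\frac{1}{1-\int_0^z e^{-P_t(v)}\,dv}-P_t(z)$. *)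

theory Defs
  imports "HOL-Analysis.Analysis" "HOL-Library.Multiset" "HOL-Library.Landau_Symbols"
begin

datatype ptree = PNode "ptree multiset"

primrec psize :: "ptree \<Rightarrow> nat" where
  "psize (PNode M) = Suc (sum_mset (image_mset psize M))"

definition polya_sigma :: real where
  "polya_sigma = real_of_ereal (conv_radius (\<lambda>n. real (card {t. psize t = n})))"

datatype ltree = LNode nat "ltree multiset"

primrec lroot :: "ltree \<Rightarrow> nat" where
  "lroot (LNode a M) = a"

primrec lsize :: "ltree \<Rightarrow> nat" where
  "lsize (LNode a M) = Suc (sum_mset (image_mset lsize M))"

primrec labels :: "ltree \<Rightarrow> nat set" where
  "labels (LNode a M) = insert a (\<Union> (set_mset (image_mset labels M)))"

primrec shape :: "ltree \<Rightarrow> ptree" where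
  "shape (LNode a M) = PNode (image_mset shape M)"

inductive increasing :: "ltree \<Rightarrow> bool" where
  "(\<And>c. c \<in># M \<Longrightarrow> a < lroot c \<and> increasing c) \<Longrightarrow> increasing (LNode a M)"

inductive fringe :: "ltree \<Rightarrow> ltree \<Rightarrow> bool" where
  fringe_refl: "fringe r r"
| fringe_child: "c \<in># M \<Longrightarrow> fringe c s \<Longrightarrow> fringe (LNode a M) s"

definition rec_trees :: "nat \<Rightarrow> ltree set" where
  "rec_trees n = {r. lsize r = n \<and> labels r = {1..n} \<and> increasing r}"

definition T_coeff :: "nat \<Rightarrow> real" where
  "T_coeff n = real (card (rec_trees n)) / fact n"

definition S_coeff :: "ptree \<Rightarrow> nat \<Rightarrow> real" where
  "S_coeff t n = real (card {r \<in> rec_trees n. \<not> (\<exists>s. fringe r s \<and> shape s = t)}) / fact n"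

end

theory Submission
  imports Defs
begin

primrec lm :: "ltree \<Rightarrow> nat multiset" where
  "lm (LNode a M) = add_mset a (sum_mset (image_mset lm M))"

primrec fr :: "ltree \<Rightarrow> ltree multiset" where
  "fr (LNode a M) = add_mset (LNode a M) (sum_mset (image_mset fr M))"

primrec ins :: "nat \<Rightarrow> nat \<Rightarrow> ltree \<Rightarrow> ltree" where
  "ins x j (LNode a M) = LNode a ((if a = j then {#LNode x {#}#} else {#}) + image_mset (ins x j) M)"

primrec del :: "nat \<Rightarrow> ltree \<Rightarrow> ltree" where
  "del x (LNode a M) = LNode a (filter_mset (\<lambda>c. lroot c \<noteq> x) (image_mset (del x) M))"

primrec par :: "nat \<Rightarrow> ltree \<Rightarrow> nat set" where
  "par x (LNode a M) = (if x \<in> lroot ` set_mset M then {a} else {}) \<union> \<Union> (set_mset (image_mset (par x) M))"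

lemma replicate_mset_add: "replicate_mset (m + n) x = replicate_mset m x + replicate_mset n x"
  by (rule multiset_eqI) auto

lemma count_sum_mset': "count (sum_mset MM) x = sum_mset (image_mset (\<lambda>M. count M x) MM)"
  by (induction MM) auto

lemma size_lm: "size (lm t) = lsize t"
  by (induction t) (auto simp: multiset.map_comp o_def intro!: arg_cong[where f=sum_mset] image_mset_cong)

lemma self_in_fr: "t \<in># fr t"
  by (cases t) auto

lemma set_lm: "set_mset (lm t) = labels t"
  by (induction t) auto

lemma lsize_pos: "lsize t \<ge> 1"
  by (cases t) auto

lemma lroot_in_lm: "lroot t \<in># lm t"
  by (cases t) auto

lemma fringe_fr: "fringe r s \<longleftrightarrow> s \<in># fr r"
proof
  show "fringe r s \<Longrightarrow> s \<in># fr r"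
    by (induction rule: fringe.induct) (auto simp: self_in_fr)
next
  show "s \<in># fr r \<Longrightarrow> fringe r s"
  proof (induction r)
    case (LNode a M)
    then show ?case by (auto intro: fringe.intros)
  qed
qed

lemma fr_lm_sub: "s \<in># fr r \<Longrightarrow> lm s \<subseteq># lm r"
proof (induction r)
  case (LNode a M)
  show ?case
  proof (cases "s = LNode a M")
    case True then show ?thesis by simp
  next
    case False
    then obtain c where c: "c \<in># M" "s \<in># fr c" using LNode.prems by auto
    have "lm s \<subseteq># lm c" using LNode.IH c by auto
    also have "lm c \<subseteq># sum_mset (image_mset lm M)"
      using c(1) by (metis image_mset_add_mset insert_DiffM mset_subset_eq_add_left sum_mset.insert)
    finally show ?thesis by (simp add: subset_mset.order_trans)
  qed
qed

lemma fr_lsize_le: "s \<in># fr r \<Longrightarrow> lsize s \<le> lsize r"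
  using fr_lm_sub size_mset_mono size_lm by metis

lemma psize_shape: "psize (shape s) = lsize s"
  by (induction s) (auto simp: multiset.map_comp o_def intro!: arg_cong[where f=sum_mset] image_mset_cong)

lemma lroot_ins[simp]: "lroot (ins x j t) = lroot t"
  by (cases t) auto

lemma lroot_del[simp]: "lroot (del x t) = lroot t"
  by (cases t) auto

lemma lm_ins: "lm (ins x j t) = lm t + replicate_mset (count (lm t) j) x"
proof (induction t rule: ltree.induct)
  case (LNode a M)
  have "sum_mset (image_mset lm (image_mset (ins x j) M)) =
        sum_mset (image_mset (\<lambda>c. lm c + replicate_mset (count (lm c) j) x) M)"
    by (simp add: multiset.map_comp o_def LNode.IH cong: image_mset_cong)
  also have "\<dots> = sum_mset (image_mset lm M) + replicate_mset (sum_mset (image_mset (\<lambda>c. count (lm c) j) M)) x"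
    by (induction M) (auto simp: replicate_mset_add)
  finally show ?case
    by (auto simp: count_sum_mset' replicate_mset_add multiset.map_comp o_def)
qed

lemma lsize_ins: "lsize (ins x j t) = lsize t + count (lm t) j"
  using lm_ins[of x j t] by (metis size_lm size_replicate_mset size_union)

lemma fr_ins: "fr (ins x j t) = image_mset (ins x j) (fr t) + replicate_mset (count (lm t) j) (LNode x {#})"
proof (induction t rule: ltree.induct)
  case (LNode a M)
  have "sum_mset (image_mset fr (image_mset (ins x j) M)) =
        sum_mset (image_mset (\<lambda>c. image_mset (ins x j) (fr c) + replicate_mset (count (lm c) j) (LNode x {#})) M)"
    by (simp add: multiset.map_comp o_def LNode.IH cong: image_mset_cong)
  also have "\<dots> = image_mset (ins x j) (sum_mset (image_mset fr M)) + replicate_mset (sum_mset (image_mset (\<lambda>c. count (lm c) j) M)) (LNode x {#})"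
    by (induction M) (auto simp: replicate_mset_add)
  finally show ?case
    by (auto simp: count_sum_mset' replicate_mset_add multiset.map_comp o_def)
qed

lemma increasing_simp: "increasing (LNode a M) \<longleftrightarrow> (\<forall>c\<in>#M. a < lroot c \<and> increasing c)"
  by (subst increasing.simps) auto

lemma count_lm: "count (lm (LNode a M)) y = (if y = a then 1 else 0) + sum_mset (image_mset (\<lambda>c. count (lm c) y) M)"
  by (simp add: count_sum_mset' multiset.map_comp o_def)

lemma increasing_ins: "increasing t \<Longrightarrow> j < x \<Longrightarrow> increasing (ins x j t)"
proof (induction t rule: ltree.induct)
  case (LNode a M)
  then show ?case by (auto simp: increasing_simp)
qed

lemma increasing_del: "increasing t \<Longrightarrow> increasing (del x t)"
proof (induction t rule: ltree.induct)
  case (LNode a M)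
  then show ?case by (auto simp: increasing_simp)
qed

lemma root_min: "increasing t \<Longrightarrow> y \<in># lm t \<Longrightarrow> lroot t \<le> y"
proof (induction t arbitrary: y)
  case (LNode a M)
  then show ?case by (force simp: increasing_simp)
qed

lemma del_id: "x \<notin># lm t \<Longrightarrow> del x t = t"
proof (induction t rule: ltree.induct)
  case (LNode a M)
  have "image_mset (del x) M = M"
    using LNode by (auto intro!: image_mset_cong[where g=id, simplified])
  moreover have "\<forall>c\<in>#M. lroot c \<noteq> x" using LNode.prems lroot_in_lm by fastforce
  ultimately show ?case by (simp add: filter_mset_eq_conv)
qed

lemma ins_id: "j \<notin># lm t \<Longrightarrow> ins x j t = t"
proof (induction t rule: ltree.induct)
  case (LNode a M)
  have "image_mset (ins x j) M = M"
    using LNode by (auto intro!: image_mset_cong[where g=id, simplified])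
  then show ?case using LNode.prems by auto
qed

lemma del_ins: "x \<notin># lm t \<Longrightarrow> del x (ins x j t) = t"
proof (induction t rule: ltree.induct)
  case (LNode a M)
  have "image_mset (del x) (image_mset (ins x j) M) = M"
    using LNode by (auto simp: multiset.map_comp o_def intro!: image_mset_cong[where g=id, simplified])
  moreover have "\<forall>c\<in>#M. lroot c \<noteq> x" using LNode.prems lroot_in_lm by fastforce
  ultimately show ?case using LNode.prems by (auto simp: filter_mset_eq_conv)
qed

lemma par_ins: "x \<notin># lm t \<Longrightarrow> par x (ins x j t) = (if j \<in># lm t then {j} else {})"
proof (induction t rule: ltree.induct)
  case (LNode a M)
  have roots: "\<forall>c\<in>#M. lroot c \<noteq> x" using LNode.prems lroot_in_lm by fastforce
  have IH: "\<And>c. c \<in># M \<Longrightarrow> par x (ins x j c) = (if j \<in># lm c then {j} else {})"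
    using LNode by auto
  have "x \<in> lroot ` set_mset ((if a = j then {#LNode x {#}#} else {#}) + image_mset (ins x j) M) \<longleftrightarrow> a = j"
    using roots by (auto simp: image_iff)
  moreover have "\<Union> (set_mset (image_mset (par x) ((if a = j then {#LNode x {#}#} else {#}) + image_mset (ins x j) M)))
     = (if \<exists>c\<in>#M. j \<in># lm c then {j} else {})"
    using IH by auto
  ultimately show ?case by auto
qed

lemma sum_mset_mono_sub: "(\<And>c. c \<in># M \<Longrightarrow> f c \<subseteq># g c) \<Longrightarrow> sum_mset (image_mset f M) \<subseteq># sum_mset (image_mset g M)"
  by (induction M) (auto intro: subset_mset.add_mono)

lemma sum_mset_sub_mono: "A \<subseteq># B \<Longrightarrow> sum_mset A \<subseteq># (sum_mset B :: 'a multiset)"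
  by (metis mset_subset_eq_add_left subset_mset.le_iff_add sum_mset.union)

lemma lm_del_sub: "lm (del x t) \<subseteq># lm t"
proof (induction t rule: ltree.induct)
  case (LNode a M)
  have "sum_mset (image_mset lm (filter_mset (\<lambda>c. lroot c \<noteq> x) (image_mset (del x) M)))
     \<subseteq># sum_mset (image_mset lm (image_mset (del x) M))"
    by (intro sum_mset_sub_mono image_mset_subseteq_mono multiset_filter_subset)
  also have "\<dots> \<subseteq># sum_mset (image_mset lm M)"
    unfolding multiset.map_comp o_def by (rule sum_mset_mono_sub) (use LNode in auto)
  finally show ?case by simp
qed

lemma le_sum_mset_nat: "d \<in># M \<Longrightarrow> (f d :: nat) \<le> sum_mset (image_mset f M)"
  by (metis add_le_cancel_left image_mset_add_mset le_add1 multi_member_split sum_mset.insert)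

lemma surj_ins:
  assumes "increasing t" "\<And>y. count (lm t) y \<le> 1" "x \<in># lm t" "x \<noteq> lroot t"
    "\<And>y. y \<in># lm t \<Longrightarrow> y \<le> x"
  shows "\<exists>j. j \<in># lm (del x t) \<and> t = ins x j (del x t)"
  using assms
proof (induction t rule: ltree.induct)
  case (LNode a M)
  from LNode.prems(3,4) obtain c where c: "c \<in># M" "x \<in># lm c" by auto
  define M0 where "M0 = M - {#c#}"
  have M: "M = add_mset c M0" using c(1) M0_def by simp
  have cnt: "count (lm (LNode a M)) y = (if y = a then 1 else 0) + count (lm c) y
       + sum_mset (image_mset (\<lambda>c. count (lm c) y) M0)" for y
    unfolding count_lm M by simp
  have le1: "(if y = a then 1 else 0) + count (lm c) y + sum_mset (image_mset (\<lambda>c. count (lm c) y) M0) \<le> 1" for y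
    using LNode.prems(2)[of y] cnt[of y] by simp
  have a_notin: "a \<notin># lm d" if "d \<in># M" for d
  proof -
    have "count (lm d) a \<le> sum_mset (image_mset (\<lambda>c. count (lm c) a) M)"
      using that by (rule le_sum_mset_nat)
    then show ?thesis using LNode.prems(2)[of a] that unfolding count_lm by (simp add: not_in_iff)
  qed
  have disj: "y \<notin># lm d" if "d \<in># M0" "y \<in># lm c" for d y
  proof -
    have "count (lm d) y \<le> sum_mset (image_mset (\<lambda>c. count (lm c) y) M0)"
      using that by (intro le_sum_mset_nat that(1))
    then show ?thesis using le1[of y] that by (auto simp flip: count_greater_zero_iff)
  qed
  have M0id: "image_mset (del x) M0 = M0"
    using disj[OF _ c(2)] del_id by (auto intro!: image_mset_cong[where g=id, simplified])
  have M0roots: "\<forall>d\<in>#M0. lroot d \<noteq> x"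
  proof
    fix d assume "d \<in># M0" then show "lroot d \<noteq> x" using disj[OF \<open>d\<in>#M0\<close> c(2)] lroot_in_lm[of d] by auto
  qed
  have incc: "increasing c" "a < lroot c" using LNode.prems(1) c(1) by (auto simp: increasing_simp)
  show ?case
  proof (cases "lroot c = x")
    case True
    obtain N where cN: "c = LNode x N" using True by (cases c) auto
    have "N = {#}"
    proof (rule ccontr)
      assume "N \<noteq> {#}"
      then obtain d where d: "d \<in># N" by auto
      have "x < lroot d" using incc(1) d cN by (auto simp: increasing_simp)
      moreover have "lroot d \<in># lm (LNode a M)" using d cN c(1) M lroot_in_lm by fastforce
      ultimately show False using LNode.prems(5)[of "lroot d"] by simp
    qed
    then have delt: "del x (LNode a M) = LNode a M0"
      using M M0id M0roots cN by (auto simp: filter_mset_eq_conv)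
    have "image_mset (ins x a) M0 = M0"
      using a_notin ins_id M by (auto intro!: image_mset_cong[where g=id, simplified])
    then have "ins x a (del x (LNode a M)) = LNode a M"
      using delt M cN \<open>N = {#}\<close> by simp
    then show ?thesis using delt by (intro exI[of _ a]) auto
  next
    case False
    have "\<exists>j. j \<in># lm (del x c) \<and> c = ins x j (del x c)"
    proof (rule LNode.IH[OF c(1) incc(1) _ c(2)])
      show "x \<noteq> lroot c" using False by simp
      show "count (lm c) y \<le> 1" for y using le1[of y] by simp
      show "y \<le> x" if "y \<in># lm c" for y
        using LNode.prems(5) that c(1) by auto
    qed
    then obtain j where j: "j \<in># lm (del x c)" "c = ins x j (del x c)" by meson
    have jc: "j \<in># lm c" by (rule mset_subset_eqD[OF lm_del_sub j(1)])
    have delt: "del x (LNode a M) = LNode a (add_mset (del x c) M0)"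
      using M M0id M0roots False by (auto simp: filter_mset_eq_conv)
    have "a \<noteq> j" using a_notin[OF c(1)] jc by auto
    moreover have "image_mset (ins x j) M0 = M0"
      using disj[OF _ jc] ins_id by (auto intro!: image_mset_cong[where g=id, simplified])
    ultimately have "ins x j (del x (LNode a M)) = LNode a M"
      using delt M j(2)[symmetric] by simp
    moreover have "j \<in># lm (del x (LNode a M))" using delt j(1) by auto
    ultimately show ?thesis by metis
  qed
qed

lemma subset_size_eq: "A \<subseteq># B \<Longrightarrow> size A = size B \<Longrightarrow> A = B"
  using mset_subset_size subset_mset.le_less by fastforce

lemma mset_set_char: "size M = card A \<Longrightarrow> set_mset M = A \<Longrightarrow> M = mset_set A"
proof -
  assume a: "size M = card A" "set_mset M = A"
  have "mset_set A \<subseteq># M" using mset_set_set_mset_msubset[of M] a(2) by simp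
  moreover have "size (mset_set A) = size M" using a(1) by simp
  ultimately show "M = mset_set A" using subset_size_eq by metis
qed

lemma rec_trees_char: "r \<in> rec_trees n \<longleftrightarrow> lm r = mset_set {1..n} \<and> increasing r"
proof -
  have "lsize r = n \<and> labels r = {1..n} \<longleftrightarrow> lm r = mset_set {1..n}"
  proof
    assume "lsize r = n \<and> labels r = {1..n}"
    then show "lm r = mset_set {1..n}" using mset_set_char[of "lm r" "{1..n}"] size_lm[of r] set_lm[of r] by simp
  next
    assume h: "lm r = mset_set {1..n}"
    have "lsize r = n" using size_lm[of r] h by simp
    moreover have "labels r = {1..n}" using set_lm[of r] h by simp
    ultimately show "lsize r = n \<and> labels r = {1..n}" by simp
  qed
  then show ?thesis unfolding rec_trees_def by blast
qed

lemma mset_set_Suc: "a \<le> Suc n \<Longrightarrow> mset_set {a..Suc n} = add_mset (Suc n) (mset_set {a..n})"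
  by (simp add: atLeastAtMostSuc_conv)

lemma rec_trees_0: "rec_trees 0 = {}"
proof -
  have "lsize r \<noteq> 0" for r using lsize_pos[of r] by simp
  then show ?thesis unfolding rec_trees_def by auto
qed

lemma rec_trees_1: "rec_trees (Suc 0) = {LNode 1 {#}}"
proof
  show "rec_trees (Suc 0) \<subseteq> {LNode 1 {#}}"
  proof
    fix r assume "r \<in> rec_trees (Suc 0)"
    then have "lm r = {#1#}" by (simp add: rec_trees_char)
    moreover obtain a M where r: "r = LNode a M" by (cases r)
    ultimately have "a = 1" "sum_mset (image_mset lm M) = {#}" by auto
    moreover have "M = {#}"
    proof (rule ccontr)
      assume "M \<noteq> {#}"
      then obtain c where "c \<in># M" by auto
      then have "lroot c \<in># sum_mset (image_mset lm M)" using lroot_in_lm by auto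
      then show False using \<open>sum_mset (image_mset lm M) = {#}\<close> by simp
    qed
    ultimately show "r \<in> {LNode 1 {#}}" using r by simp
  qed
next
  show "{LNode 1 {#}} \<subseteq> rec_trees (Suc 0)"
    by (simp add: rec_trees_char increasing_simp)
qed

lemma ins_in_rec:
  assumes "r \<in> rec_trees n" "j \<in> {1..n}"
  shows "ins (Suc n) j r \<in> rec_trees (Suc n)"
proof -
  have "lm r = mset_set {1..n}" "increasing r" using assms(1) by (auto simp: rec_trees_char)
  moreover have "count (lm r) j = 1" using assms(2) \<open>lm r = _\<close> by simp
  ultimately show ?thesis using assms(2)
    by (auto simp: rec_trees_char lm_ins mset_set_Suc intro!: increasing_ins)
qed

lemma ins_inj:
  assumes "r \<in> rec_trees n" "j \<in> {1..n}" "r' \<in> rec_trees n" "j' \<in> {1..n}"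
    "ins (Suc n) j r = ins (Suc n) j' r'"
  shows "r = r' \<and> j = j'"
proof -
  have nr: "Suc n \<notin># lm r" "Suc n \<notin># lm r'" using assms by (auto simp: rec_trees_char)
  have jr: "j \<in># lm r" "j' \<in># lm r'" using assms by (auto simp: rec_trees_char)
  have "r = r'" using del_ins[OF nr(1), of j] del_ins[OF nr(2), of j'] assms(5) by simp
  moreover have "{j} = {j'}" using par_ins[OF nr(1), of j] par_ins[OF nr(2), of j'] assms(5) jr by simp
  ultimately show ?thesis by simp
qed

lemma rec_trees_Suc:
  assumes "n \<ge> 1"
  shows "rec_trees (Suc n) = (\<lambda>(r, j). ins (Suc n) j r) ` (rec_trees n \<times> {1..n})"
proof
  show "(\<lambda>(r, j). ins (Suc n) j r) ` (rec_trees n \<times> {1..n}) \<subseteq> rec_trees (Suc n)"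
    using ins_in_rec by auto
next
  show "rec_trees (Suc n) \<subseteq> (\<lambda>(r, j). ins (Suc n) j r) ` (rec_trees n \<times> {1..n})"
  proof
    fix t assume t: "t \<in> rec_trees (Suc n)"
    let ?x = "Suc n"
    have lmt: "lm t = mset_set {1..Suc n}" and inc: "increasing t" using t by (auto simp: rec_trees_char)
    have cnt: "count (lm t) y \<le> 1" for y using lmt by (simp add: count_mset_set')
    have xin: "?x \<in># lm t" using lmt by simp
    have ub: "y \<in># lm t \<Longrightarrow> y \<le> ?x" for y using lmt by simp
    have "lroot t \<le> 1" using root_min[OF inc, of 1] lmt by simp
    then have xr: "?x \<noteq> lroot t" using assms by simp
    obtain j where j: "j \<in># lm (del ?x t)" "t = ins ?x j (del ?x t)"
      using surj_ins[OF inc cnt xin xr ub] by iprover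
    let ?D = "lm (del ?x t)"
    have "lm (ins ?x j (del ?x t)) = ?D + replicate_mset (count ?D j) ?x" by (rule lm_ins)
    then have eqn: "lm t = ?D + replicate_mset (count ?D j) ?x" by (simp only: j(2)[symmetric])
    have cy: "count (lm t) y = count ?D y + (if y = ?x then count ?D j else 0)" for y
      by (subst eqn) simp
    have "count ?D j \<ge> 1" using j(1) by (simp add: Suc_le_eq)
    moreover have "count (lm t) ?x = 1" using lmt by simp
    moreover have "count (lm t) ?x = count ?D ?x + count ?D j" using cy[of ?x] by simp
    ultimately have D1: "count ?D j = 1" "count ?D ?x = 0" by linarith+
    have "lm t = add_mset ?x ?D" using eqn D1 by simp
    then have Dm: "?D = mset_set {1..n}" using lmt mset_set_Suc[of 1 n] by simp
    then have "j \<in> {1..n}" using j(1) by simp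
    moreover have "del ?x t \<in> rec_trees n" using Dm increasing_del[OF inc] by (simp add: rec_trees_char)
    ultimately have mem: "(del ?x t, j) \<in> rec_trees n \<times> {1..n}" by simp
    have "t = (\<lambda>(r, j). ins (Suc n) j r) (del ?x t, j)" unfolding prod.case by (rule j(2))
    then show "t \<in> (\<lambda>(r, j). ins (Suc n) j r) ` (rec_trees n \<times> {1..n})"
      using mem by (rule image_eqI)
  qed
qed

lemma rec_trees_inj: "inj_on (\<lambda>(r, j). ins (Suc n) j r) (rec_trees n \<times> {1..n})"
  unfolding inj_on_def by (auto dest: ins_inj)

lemma finite_rec: "finite (rec_trees n)"
proof (induction n)
  case 0 then show ?case by (simp add: rec_trees_0)
next
  case (Suc n)
  show ?case
  proof (cases "n = 0")
    case True then show ?thesis by (simp add: rec_trees_1)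
  next
    case False then show ?thesis using Suc rec_trees_Suc[of n] by simp
  qed
qed

lemma card_rec: "n \<ge> 1 \<Longrightarrow> card (rec_trees n) = fact (n - 1)"
proof (induction n rule: dec_induct)
  case base then show ?case by (simp add: rec_trees_1)
next
  case (step n)
  have "card (rec_trees (Suc n)) = card (rec_trees n \<times> {1..n})"
    using rec_trees_Suc[OF step(1)] card_image[OF rec_trees_inj] by simp
  also have "\<dots> = fact (n - 1) * n" using step by (simp add: card_cartesian_product)
  also have "\<dots> = fact n" using step(1) by (cases n) (auto simp: algebra_simps)
  finally show ?case by simp
qed

definition W :: "nat \<Rightarrow> (nat \<Rightarrow> real) \<Rightarrow> real" where
  "W n h = (\<Sum>r\<in>rec_trees n. sum_mset (image_mset (\<lambda>s. h (lsize s)) (fr r)))"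

lemma sum_sum_mset_swap:
  "sum_mset (image_mset (\<lambda>s. \<Sum>j\<in>A. F j s) M) = (\<Sum>j\<in>A. sum_mset (image_mset (F j) M))"
  by (induction M) (auto simp: sum.distrib)

lemma sum_mset_cong_real: "(\<And>s. s \<in># M \<Longrightarrow> f s = g s) \<Longrightarrow> sum_mset (image_mset f M) = sum_mset (image_mset g M)"
  by (metis image_mset_cong)

lemma fr_in_rec:
  assumes "r \<in> rec_trees n" "s \<in># fr r"
  shows "lm s = mset_set (set_mset (lm s))" "set_mset (lm s) \<subseteq> {1..n}" "card (set_mset (lm s)) = lsize s"
    "1 \<le> lsize s" "lsize s \<le> n"
proof -
  have sub: "lm s \<subseteq># mset_set {1..n}" using fr_lm_sub[OF assms(2)] assms(1) by (simp add: rec_trees_char)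
  show lms: "lm s = mset_set (set_mset (lm s))"
  proof (rule multiset_eqI)
    fix y
    have "count (lm s) y \<le> count (mset_set {1..n}) y" using sub by (simp add: subseteq_mset_def)
    then have "count (lm s) y \<le> 1" by (simp add: count_mset_set' split: if_splits)
    show "count (lm s) y = count (mset_set (set_mset (lm s))) y"
    proof (cases "y \<in># lm s")
      case True
      then have "count (lm s) y \<ge> 1" by (simp add: Suc_le_eq)
      then have "count (lm s) y = 1" using \<open>count (lm s) y \<le> 1\<close> by linarith
      then show ?thesis using True by simp
    next
      case False then show ?thesis by (simp add: not_in_iff)
    qed
  qed
  show "set_mset (lm s) \<subseteq> {1..n}" using mset_subset_eqD[OF sub] by auto
  show "card (set_mset (lm s)) = lsize s" using lms size_lm[of s] by (metis size_mset_set)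
  show "1 \<le> lsize s" by (rule lsize_pos)
  show "lsize s \<le> n" using fr_lsize_le[OF assms(2)] assms(1) by (simp add: rec_trees_def)
qed

lemma sum_indicator_split:
  fixes h :: "nat \<Rightarrow> real" and k :: nat
  assumes "A \<subseteq> {1..n}"
  shows "(\<Sum>j\<in>{1..n}. h (k + (if j \<in> A then 1 else 0)) :: real) = real (card A) * h (k + 1) + (real n - real (card A)) * h k"
proof -
  have fA: "finite A" using assms finite_subset by blast
  have "(\<Sum>j\<in>{1..n}. h (k + (if j \<in> A then 1 else 0))) = (\<Sum>j\<in>{1..n}. if j \<in> A then h (k + 1) else h k)"
    by (rule sum.cong) simp_all
  also have "\<dots> = (\<Sum>j\<in>{1..n} \<inter> A. h (k + 1)) + (\<Sum>j\<in>{1..n} - A. h k)"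
    by (simp add: sum.If_cases Diff_eq)
  also have "{1..n} \<inter> A = A" using assms by blast
  also have "card ({1..n} - A) = n - card A" using assms fA by (simp add: card_Diff_subset)
  then have "(\<Sum>j\<in>{1..n} - A. h k) = (real n - real (card A)) * h k"
    using card_mono[OF _ assms] by (simp add: of_nat_diff)
  finally show ?thesis by simp
qed

lemma inner_step:
  assumes r: "r \<in> rec_trees n"
  shows "(\<Sum>j\<in>{1..n}. sum_mset (image_mset (\<lambda>s. h (lsize s)) (fr (ins (Suc n) j r))))
       = sum_mset (image_mset (\<lambda>s. real (lsize s) * h (lsize s + 1) + (real n - real (lsize s)) * h (lsize s)) (fr r))
         + real n * h 1"
proof -
  have lmr: "lm r = mset_set {1..n}" using r by (simp add: rec_trees_char)
  have "sum_mset (image_mset (\<lambda>s. h (lsize s)) (fr (ins (Suc n) j r)))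
      = sum_mset (image_mset (\<lambda>s. h (lsize s + (if j \<in> set_mset (lm s) then 1 else 0))) (fr r)) + h 1"
    if j: "j \<in> {1..n}" for j
  proof -
    have "count (lm r) j = 1" using j lmr by simp
    then have "sum_mset (image_mset (\<lambda>s. h (lsize s)) (fr (ins (Suc n) j r)))
        = sum_mset (image_mset (\<lambda>s. h (lsize (ins (Suc n) j s))) (fr r)) + h 1"
      by (simp add: fr_ins multiset.map_comp o_def)
    also have "sum_mset (image_mset (\<lambda>s. h (lsize (ins (Suc n) j s))) (fr r))
        = sum_mset (image_mset (\<lambda>s. h (lsize s + (if j \<in> set_mset (lm s) then 1 else 0))) (fr r))"
    proof (rule sum_mset_cong_real)
      fix s assume s: "s \<in># fr r"
      have "count (lm s) j = (if j \<in> set_mset (lm s) then 1 else 0)"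
        using fr_in_rec(1)[OF r s] by (metis count_mset_set(1) count_mset_set(3) finite_set_mset)
      then show "h (lsize (ins (Suc n) j s)) = h (lsize s + (if j \<in> set_mset (lm s) then 1 else 0))"
        by (simp add: lsize_ins)
    qed
    finally show ?thesis .
  qed
  then have "(\<Sum>j\<in>{1..n}. sum_mset (image_mset (\<lambda>s. h (lsize s)) (fr (ins (Suc n) j r))))
     = (\<Sum>j\<in>{1..n}. sum_mset (image_mset (\<lambda>s. h (lsize s + (if j \<in> set_mset (lm s) then 1 else 0))) (fr r)) + h 1)"
    by (rule sum.cong[OF refl])
  also have "\<dots> = (\<Sum>j\<in>{1..n}. sum_mset (image_mset (\<lambda>s. h (lsize s + (if j \<in> set_mset (lm s) then 1 else 0))) (fr r))) + real n * h 1"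
    by (simp add: sum.distrib)
  also have "(\<Sum>j\<in>{1..n}. sum_mset (image_mset (\<lambda>s. h (lsize s + (if j \<in> set_mset (lm s) then 1 else 0))) (fr r)))
     = sum_mset (image_mset (\<lambda>s. \<Sum>j\<in>{1..n}. h (lsize s + (if j \<in> set_mset (lm s) then 1 else 0))) (fr r))"
    by (rule sum_sum_mset_swap[symmetric])
  also have "\<dots> = sum_mset (image_mset (\<lambda>s. real (lsize s) * h (lsize s + 1) + (real n - real (lsize s)) * h (lsize s)) (fr r))"
  proof (rule sum_mset_cong_real)
    fix s assume s: "s \<in># fr r"
    show "(\<Sum>j\<in>{1..n}. h (lsize s + (if j \<in> set_mset (lm s) then 1 else 0))) =
         real (lsize s) * h (lsize s + 1) + (real n - real (lsize s)) * h (lsize s)"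
      using sum_indicator_split[OF fr_in_rec(2)[OF r s], of h "lsize s"] fr_in_rec(3)[OF r s] by simp
  qed
  finally show ?thesis .
qed

lemma W_Suc:
  assumes "n \<ge> 1"
  shows "W (Suc n) h = W n (\<lambda>k. real k * h (k + 1) + (real n - real k) * h k) + real n * h 1 * real (card (rec_trees n))"
proof -
  let ?F = "\<lambda>t. sum_mset (image_mset (\<lambda>s. h (lsize s)) (fr t))"
  have "W (Suc n) h = sum ?F ((\<lambda>(r, j). ins (Suc n) j r) ` (rec_trees n \<times> {1..n}))"
    unfolding W_def using rec_trees_Suc[OF assms] by simp
  also have "\<dots> = (\<Sum>(r, j)\<in>rec_trees n \<times> {1..n}. ?F (ins (Suc n) j r))"
    by (subst sum.reindex[OF rec_trees_inj]) (simp add: o_def case_prod_unfold)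
  also have "\<dots> = (\<Sum>r\<in>rec_trees n. \<Sum>j\<in>{1..n}. ?F (ins (Suc n) j r))"
    by (rule sum.cartesian_product[symmetric])
  also have "\<dots> = (\<Sum>r\<in>rec_trees n. sum_mset (image_mset (\<lambda>s. real (lsize s) * h (lsize s + 1) + (real n - real (lsize s)) * h (lsize s)) (fr r))
         + real n * h 1)"
    by (rule sum.cong[OF refl]) (rule inner_step)
  also have "\<dots> = W n (\<lambda>k. real k * h (k + 1) + (real n - real k) * h k) + real n * h 1 * real (card (rec_trees n))"
    by (simp add: W_def sum.distrib)
  finally show ?thesis .
qed

lemma W_cong: "(\<And>k. 1 \<le> k \<Longrightarrow> k \<le> n \<Longrightarrow> p k = q k) \<Longrightarrow> W n p = W n q"
  unfolding W_def
  by (intro sum.cong refl sum_mset_cong_real) (metis fr_in_rec(4,5))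

lemma W_lin: "W n (\<lambda>k. a * p k + b * q k) = a * W n p + b * W n q"
  unfolding W_def by (simp add: sum.distrib sum_distrib_left sum_mset_distrib_left multiset.map_comp o_def
     sum_mset.distrib)

lemma W_sum: "finite S \<Longrightarrow> W n (\<lambda>k. \<Sum>m\<in>S. p m k) = (\<Sum>m\<in>S. W n (p m))"
  unfolding W_def by (simp add: sum_sum_mset_swap) (rule sum.swap)

definition cc :: "nat \<Rightarrow> nat \<Rightarrow> real" where
  "cc n m = (if m = 0 then 0 else if m < n then real n / (real m * (real m + 1)) else if m = n then 1 else 0)"

lemma W_zero: "W n (\<lambda>k. 0) = 0"
  by (simp add: W_def)

lemma W_1: "W (Suc 0) h = h 1"
  by (simp add: W_def rec_trees_1)

lemma e_zero: "W n (\<lambda>k. if k = 0 then 1 else 0) = 0"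
proof -
  have "W n (\<lambda>k. if k = 0 then 1 else 0) = W n (\<lambda>k. 0)" by (rule W_cong) auto
  then show ?thesis by (simp add: W_zero)
qed

lemma t1: fixes x y :: real assumes "x \<ge> 2"
  shows "(x - 1) * (y / ((x - 1) * x)) + (y - x) * (y / (x * (x + 1))) = y * ((y + 1) / (x * (x + 1)))"
proof -
  have "x - 1 \<noteq> 0" "x \<noteq> 0" "x + 1 \<noteq> 0" using assms by auto
  then show ?thesis by (simp add: divide_simps) (simp add: algebra_simps)
qed
lemma t2: fixes L n :: real assumes "L \<ge> 1"
  shows "n / (L * (L + 1)) + n / (L + 1) = n / L"
proof -
  have "L \<noteq> 0" "L + 1 \<noteq> 0" using assms by auto
  then show ?thesis by (simp add: divide_simps) (simp add: algebra_simps)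
qed

lemma cc_rec:
  assumes "n \<ge> 1" "m \<ge> 1"
  shows "(real m - 1) * cc n (m - 1) + (real n - real m) * cc n m + real n * (if 1 = m then 1 else 0)
       = real n * cc (Suc n) m"
proof (cases "m = 1")
  case True
  then show ?thesis
  proof (cases "n = 1")
    case True then show ?thesis using \<open>m = 1\<close> by (simp add: cc_def)
  next
    case False
    then have "n \<ge> 2" using assms by simp
    then show ?thesis using \<open>m = 1\<close> by (simp add: cc_def field_simps)
  qed
next
  case False
  then have m2: "m \<ge> 2" using assms by simp
  have m1: "real (m - 1) = real m - 1" using assms by (simp add: of_nat_diff)
  consider "m < n" | "m = n" | "m = Suc n" | "m > Suc n" by linarith
  then show ?thesis
  proof cases
    case 1
    have a: "cc n (m - 1) = real n / ((real m - 1) * real m)" using m2 1 m1 by (simp add: cc_def)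
    have b: "cc n m = real n / (real m * (real m + 1))" using m2 1 by (simp add: cc_def)
    have c: "cc (Suc n) m = (real n + 1) / (real m * (real m + 1))" using m2 1 by (simp add: cc_def)
    have nz: "real m - 1 \<noteq> 0" "real m \<noteq> 0" "real m + 1 \<noteq> 0" using m2 by auto
    have "real m \<ge> 2" using m2 by simp
    then show ?thesis unfolding a b c using False t1[of "real m" "real n"] by simp
  next
    case 2
    have "real n > 0" using m2 2 by simp
    then have "real n + real n * real n \<noteq> 0" by (metis add_pos_pos mult_pos_pos less_irrefl)
    then show ?thesis using m2 m1 2 by (simp add: cc_def field_simps)
  next
    case 3
    then show ?thesis using m2 m1 by (simp add: cc_def field_simps)
  next
    case 4
    then show ?thesis using m2 m1 by (simp add: cc_def field_simps)
  qed
qed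

lemma e_formula: "n \<ge> 1 \<Longrightarrow> W n (\<lambda>k. if k = m then 1 else 0) = fact (n - 1) * cc n m"
proof (induction n arbitrary: m rule: dec_induct)
  case base
  then show ?case by (simp add: W_1 cc_def)
next
  case (step n)
  show ?case
  proof (cases "m = 0")
    case True then show ?thesis by (simp add: e_zero cc_def)
  next
    case False
    have g: "(\<lambda>k. real k * (if k + 1 = m then 1 else 0) + (real n - real k) * (if k = m then 1 else 0))
       = (\<lambda>k. (real m - 1) * (if k = m - 1 then 1 else 0) + (real n - real m) * (if k = m then 1 else 0))"
      using False by (auto simp: fun_eq_iff)
    have "W (Suc n) (\<lambda>k. if k = m then 1 else 0)
        = (real m - 1) * W n (\<lambda>k. if k = m - 1 then 1 else 0) + (real n - real m) * W n (\<lambda>k. if k = m then 1 else 0)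
          + real n * (if 1 = m then 1 else 0) * real (card (rec_trees n))"
      using W_Suc[OF step(1), of "\<lambda>k. if k = m then 1 else 0"] g W_lin by simp
    also have "\<dots> = fact (n - 1) * ((real m - 1) * cc n (m - 1) + (real n - real m) * cc n m + real n * (if 1 = m then 1 else 0))"
      using step card_rec[OF step(1)] by (simp add: algebra_simps)
    also have "\<dots> = fact (n - 1) * (real n * cc (Suc n) m)"
      using cc_rec[OF step(1)] False by simp
    also have "\<dots> = fact n * cc (Suc n) m"
      using step(1) by (cases n) (auto simp: algebra_simps)
    finally show ?thesis by simp
  qed
qed

lemma cc_tail: "1 \<le> L \<Longrightarrow> L \<le> n \<Longrightarrow> (\<Sum>m\<in>{L..n}. cc n m) = real n / real L"
proof (induction "n - L" arbitrary: L)
  case 0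
  then have "L = n" by simp
  then show ?case using 0 by (simp add: cc_def)
next
  case (Suc d)
  then have Ln: "L < n" by simp
  have "{L..n} = insert L {Suc L..n}" using Ln by auto
  then have "(\<Sum>m\<in>{L..n}. cc n m) = cc n L + (\<Sum>m\<in>{Suc L..n}. cc n m)" by simp
  also have "(\<Sum>m\<in>{Suc L..n}. cc n m) = real n / real (Suc L)"
    using Suc.hyps(1)[of "Suc L"] Suc.hyps(2) Ln by simp
  also have "cc n L = real n / (real L * (real L + 1))" using Ln Suc.prems by (simp add: cc_def)
  also have "real n / (real L * (real L + 1)) + real n / real (Suc L) = real n / real L"
    using Suc.prems t2[of "real L" "real n"] by (simp add: add.commute)
  finally show ?case .
qed

lemma G_formula:
  assumes "n \<ge> 1" "L \<ge> 1"
  shows "W n (\<lambda>k. if L \<le> k then 1 else 0) \<le> fact (n - 1) * (real n / real L)"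
proof (cases "L \<le> n")
  case True
  have "W n (\<lambda>k. if L \<le> k then 1 else 0) = W n (\<lambda>k. \<Sum>m\<in>{L..n}. if k = m then 1 else 0)"
    by (rule W_cong) auto
  also have "\<dots> = (\<Sum>m\<in>{L..n}. W n (\<lambda>k. if k = m then 1 else 0))"
    by (rule W_sum) simp
  also have "\<dots> = (\<Sum>m\<in>{L..n}. fact (n - 1) * cc n m)"
    by (rule sum.cong[OF refl]) (rule e_formula[OF assms(1)])
  also have "\<dots> = fact (n - 1) * (real n / real L)"
    by (simp add: sum_distrib_left[symmetric] cc_tail[OF assms(2) True])
  finally show ?thesis by simp
next
  case False
  have "W n (\<lambda>k. if L \<le> k then 1 else 0) = W n (\<lambda>k. 0)"
    by (rule W_cong) (use False in auto)
  then show ?thesis by (simp add: W_zero)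
qed


definition lst :: "'a multiset \<Rightarrow> 'a list" where
  "lst N = (SOME xs. mset xs = N)"

lemma mset_lst[simp]: "mset (lst N) = N"
  unfolding lst_def by (rule someI_ex) (rule ex_mset)

primrec enc :: "ptree \<Rightarrow> bool list" where
  "enc (PNode M) = True # concat (lst (image_mset enc M)) @ [False]"

lemma length_concat_mset: "length (concat xs) = sum_mset (image_mset length (mset xs))"
  by (induction xs) auto

lemma length_enc: "length (enc t) = 2 * psize t"
proof (induction t)
  case (PNode M)
  have "length (concat (lst (image_mset enc M))) = sum_mset (image_mset (\<lambda>c. 2 * psize c) M)"
    unfolding length_concat_mset mset_lst multiset.map_comp o_def
    using PNode by (metis (no_types, lifting) image_mset_cong)
  also have "\<dots> = 2 * sum_mset (image_mset psize M)"
    by (induction M) auto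
  finally show ?case by simp
qed

lemma enc_hd: "\<exists>w. enc t = True # w"
  by (cases t) auto

lemma concat_prefix:
  assumes "\<forall>x\<in>set xs. \<exists>t. x = enc t \<and> (\<forall>s r r'. enc t @ r = enc s @ r' \<longrightarrow> t = s \<and> r = r')"
    "\<forall>y\<in>set ys. \<exists>s. y = enc s"
    "concat xs @ False # r = concat ys @ False # r'"
  shows "xs = ys \<and> r = r'"
  using assms
proof (induction xs arbitrary: ys)
  case Nil
  show ?case
  proof (cases ys)
    case Nil then show ?thesis using Nil.prems by simp
  next
    case (Cons y ys')
    then obtain s where "y = enc s" using Nil.prems(2) by auto
    then obtain w where "y = True # w" using enc_hd by metis
    then show ?thesis using Nil.prems(3) Cons by simp
  qed
next
  case (Cons x xs)
  obtain t where t: "x = enc t" "\<forall>s r r'. enc t @ r = enc s @ r' \<longrightarrow> t = s \<and> r = r'"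
    using Cons.prems(1) by auto
  show ?case
  proof (cases ys)
    case Nil
    obtain w where "x = True # w" using enc_hd t(1) by metis
    then show ?thesis using Cons.prems(3) Nil by simp
  next
    case (Cons y ys')
    then obtain s where s: "y = enc s" using Cons.prems(2) by auto
    have "enc t @ (concat xs @ False # r) = enc s @ (concat ys' @ False # r')"
      using Cons.prems(3) \<open>ys = y # ys'\<close> t(1) s by simp
    then have "t = s" and rest: "concat xs @ False # r = concat ys' @ False # r'" using t(2) by blast+
    have "xs = ys' \<and> r = r'"
      using Cons.IH[OF _ _ rest] Cons.prems(1,2) \<open>ys = y # ys'\<close> by simp
    then show ?thesis using \<open>t = s\<close> t(1) s \<open>ys = y # ys'\<close> by simp
  qed
qed

lemma enc_prefix: "enc t @ r = enc s @ r' \<Longrightarrow> t = s \<and> r = r'"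
proof (induction t arbitrary: s r r')
  case (PNode M)
  obtain N where sN: "s = PNode N" by (cases s)
  let ?xs = "lst (image_mset enc M)" and ?ys = "lst (image_mset enc N)"
  have eq: "concat ?xs @ False # r = concat ?ys @ False # r'"
    using PNode.prems sN by simp
  have h1: "\<forall>x\<in>set ?xs. \<exists>t. x = enc t \<and> (\<forall>s r r'. enc t @ r = enc s @ r' \<longrightarrow> t = s \<and> r = r')"
  proof
    fix x assume "x \<in> set ?xs"
    then have "x \<in># image_mset enc M" by (metis mset_lst set_mset_mset)
    then obtain t where "t \<in># M" "x = enc t" by auto
    then show "\<exists>t. x = enc t \<and> (\<forall>s r r'. enc t @ r = enc s @ r' \<longrightarrow> t = s \<and> r = r')"
      using PNode.IH by blast
  qed
  have h2: "\<forall>y\<in>set ?ys. \<exists>s. y = enc s"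
  proof
    fix y assume "y \<in> set ?ys"
    then have "y \<in># image_mset enc N" by (metis mset_lst set_mset_mset)
    then show "\<exists>s. y = enc s" by auto
  qed
  have "?xs = ?ys" "r = r'" using concat_prefix[OF h1 h2 eq] by auto
  then have eqm: "image_mset enc M = image_mset enc N" by (metis mset_lst)
  have injh: "\<And>z za. z \<in> set_mset M \<Longrightarrow> za \<in> set_mset N \<Longrightarrow> enc z = enc za \<Longrightarrow> z = za"
  proof -
    fix z za assume "z \<in> set_mset M" "za \<in> set_mset N" "enc z = enc za"
    then show "z = za" using PNode.IH[where s=za and r="[]" and ?r'="[]"] by simp
  qed
  have "M = N" by (rule multiset.inj_map_strong[OF injh eqm])
  then show ?case using sN \<open>r = r'\<close> by simp
qed

lemma inj_enc: "inj enc"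
  by (rule injI) (use enc_prefix[of _ "[]" _ "[]"] in simp)

fun gtr :: "bool list \<Rightarrow> ptree" where
  "gtr [] = PNode {#}"
| "gtr (True # bs) = PNode {#gtr bs, PNode {#}#}"
| "gtr (False # bs) = PNode {#PNode {#gtr bs#}#}"

lemma psize_gtr: "psize (gtr bs) = 2 * length bs + 1"
  by (induction bs rule: gtr.induct) auto

lemma inj_gtr: "inj gtr"
proof (rule injI)
  fix xs ys show "gtr xs = gtr ys \<Longrightarrow> xs = ys"
  proof (induction xs arbitrary: ys rule: gtr.induct)
    case 1 then show ?case by (cases ys rule: gtr.cases) auto
  next
    case (2 bs) then show ?case by (cases ys rule: gtr.cases) (auto simp: add_mset_eq_single add_eq_conv_diff)
  next
    case (3 bs) then show ?case by (cases ys rule: gtr.cases) (auto simp: add_mset_eq_single add_eq_conv_diff)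
  qed
qed

abbreviation pcount :: "nat \<Rightarrow> real" where
  "pcount n \<equiv> real (card {t. psize t = n})"

lemma card_bool_lists: "card {xs :: bool list. length xs = n} = 2 ^ n"
  using card_lists_length_eq[of "UNIV :: bool set" n] by simp

lemma finite_psize: "finite {t. psize t = n}" and card_psize_le: "card {t. psize t = n} \<le> 4 ^ n"
proof -
  have sub: "enc ` {t. psize t = n} \<subseteq> {xs. length xs = 2 * n}" using length_enc by auto
  have fin: "finite {xs :: bool list. length xs = 2 * n}" by (rule finite_list_length)
  then show "finite {t. psize t = n}"
    using finite_subset[OF sub] finite_imageD inj_enc by (metis inj_on_subset subset_UNIV)
  have "card {t. psize t = n} = card (enc ` {t. psize t = n})"
    by (rule card_image[symmetric]) (meson inj_enc inj_on_subset subset_UNIV)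
  also have "\<dots> \<le> card {xs :: bool list. length xs = 2 * n}" by (rule card_mono[OF fin sub])
  also have "\<dots> = 4 ^ n" by (simp add: card_bool_lists power_mult)
  finally show "card {t. psize t = n} \<le> 4 ^ n" .
qed

lemma card_psize_ge: "card {t. psize t = 2 * k + 1} \<ge> 2 ^ k"
proof -
  have sub: "gtr ` {bs. length bs = k} \<subseteq> {t. psize t = 2 * k + 1}" using psize_gtr by auto
  have "2 ^ k = card (gtr ` {bs :: bool list. length bs = k})"
    by (simp add: card_image[OF inj_on_subset[OF inj_gtr]] card_bool_lists)
  also have "\<dots> \<le> card {t. psize t = 2 * k + 1}" by (rule card_mono[OF finite_psize sub])
  finally show ?thesis .
qed

lemma sigma_ge: "conv_radius pcount \<ge> ereal (1/8)"
proof -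
  have "summable (\<lambda>n. pcount n * (1/8) ^ n)"
  proof (rule summable_comparison_test'[where g = "\<lambda>n. (1/2) ^ n"])
    show "summable (\<lambda>n. (1/2 :: real) ^ n)" by (rule summable_geometric) simp
    fix n :: nat
    have "pcount n \<le> 4 ^ n" using card_psize_le[of n] by (metis of_nat_le_iff of_nat_numeral of_nat_power)
    then have "pcount n * (1/8) ^ n \<le> 4 ^ n * (1/8) ^ n" by (intro mult_right_mono) auto
    also have "\<dots> = (4 * (1/8)) ^ n" by (rule power_mult_distrib[symmetric])
    also have "\<dots> = (1/2) ^ n" by simp
    finally show "norm (pcount n * (1/8) ^ n) \<le> (1/2) ^ n" by simp
  qed
  from conv_radius_geI[OF this] show ?thesis by simp
qed

lemma sigma_le: "conv_radius pcount \<le> ereal (3/4)"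
proof -
  have "\<not> summable (\<lambda>n. pcount n * (3/4) ^ n)"
  proof
    assume "summable (\<lambda>n. pcount n * (3/4) ^ n)"
    then have "(\<lambda>n. pcount n * (3/4) ^ n) \<longlonglongrightarrow> 0" by (rule summable_LIMSEQ_zero)
    then obtain N where N: "\<And>n. n \<ge> N \<Longrightarrow> norm (pcount n * (3/4) ^ n) < 1/2"
      using LIMSEQ_D[of _ 0 "1/2"] by force
    have "(2::real) ^ N * (3/4) ^ (2 * N + 1) \<le> pcount (2 * N + 1) * (3/4) ^ (2 * N + 1)"
      using card_psize_ge[of N] by (intro mult_right_mono) (auto simp flip: of_nat_power)
    moreover have "(2::real) ^ N * (3/4) ^ (2 * N + 1) = (3/4) * (2 * ((3/4)^2)) ^ N"
    proof -
      have e1: "(3/4::real) ^ (2*N+1) = (3/4) * ((3/4)^2)^N" by (simp add: power_mult)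
      have e2: "(2::real)^N * ((3/4)^2)^N = (2 * (3/4)^2)^N" by (rule power_mult_distrib[symmetric])
      have "(2::real) ^ N * (3/4) ^ (2 * N + 1) = (3/4) * ((2::real)^N * ((3/4)^2)^N)"
        unfolding e1 by (rule mult.left_commute)
      then show ?thesis unfolding e2 .
    qed
    moreover have "(1::real) \<le> (2 * ((3/4)^2)) ^ N" by (rule one_le_power) (simp add: power2_eq_square)
    ultimately have "pcount (2 * N + 1) * (3/4) ^ (2 * N + 1) \<ge> 3/4" by linarith
    with N[of "2 * N + 1"] show False by simp
  qed
  from conv_radius_leI'[OF this] show ?thesis by simp
qed

lemma sigma_bounds: "1/8 \<le> polya_sigma" "polya_sigma \<le> 3/4"
proof -
  obtain r where r: "conv_radius pcount = ereal r"
    using sigma_ge sigma_le by (cases "conv_radius pcount") auto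
  then have "1/8 \<le> r" "r \<le> 3/4" using sigma_ge sigma_le by (simp_all only: ereal_less_eq(3))
  then show "1/8 \<le> polya_sigma" "polya_sigma \<le> 3/4" unfolding polya_sigma_def using r by auto
qed


lemma card_set_mset_le: "card (set_mset M) \<le> size M"
  by (induction M) (auto simp: card_insert_if)

lemma size_filter_real: "real (size (filter_mset p M)) = sum_mset (image_mset (\<lambda>s. if p s then 1 else 0) M)"
  by (induction M) auto

lemma per_tree_bound:
  assumes "\<And>t. t \<in> P \<Longrightarrow> L \<le> psize t"
  shows "real (card {t\<in>P. \<exists>s. fringe r s \<and> shape s = t})
     \<le> sum_mset (image_mset (\<lambda>s. if L \<le> lsize s then 1 else 0) (fr r))"
proof -
  have "{t\<in>P. \<exists>s. fringe r s \<and> shape s = t} \<subseteq> shape ` set_mset (filter_mset (\<lambda>s. L \<le> lsize s) (fr r))"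
  proof
    fix t assume "t \<in> {t\<in>P. \<exists>s. fringe r s \<and> shape s = t}"
    then obtain s where "t \<in> P" "fringe r s" "shape s = t" by blast
    then have "s \<in># fr r" "L \<le> lsize s" using fringe_fr[of r s] assms(1)[of t] psize_shape[of s] by auto
    then show "t \<in> shape ` set_mset (filter_mset (\<lambda>s. L \<le> lsize s) (fr r))"
      using \<open>shape s = t\<close> by auto
  qed
  then have "card {t\<in>P. \<exists>s. fringe r s \<and> shape s = t} \<le> card (shape ` set_mset (filter_mset (\<lambda>s. L \<le> lsize s) (fr r)))"
    by (rule card_mono[rotated]) simp
  also have "\<dots> \<le> card (set_mset (filter_mset (\<lambda>s. L \<le> lsize s) (fr r)))" by (rule card_image_le) simp
  also have "\<dots> \<le> size (filter_mset (\<lambda>s. L \<le> lsize s) (fr r))" by (rule card_set_mset_le)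
  finally show ?thesis using size_filter_real[of "\<lambda>s. L \<le> lsize s" "fr r"]
    by (metis of_nat_le_iff)
qed

lemma ratio_eq:
  assumes "n \<ge> 1"
  shows "1 - S_coeff t n / T_coeff n =
    real (card {r \<in> rec_trees n. \<exists>s. fringe r s \<and> shape s = t}) / real (card (rec_trees n))"
proof -
  let ?R = "rec_trees n" and ?Q = "\<lambda>r. \<exists>s. fringe r s \<and> shape s = t"
  have fin: "finite ?R" by (rule finite_rec)
  have pos: "real (card ?R) > 0" using card_rec[OF assms] by simp
  have "?R = {r \<in> ?R. \<not> ?Q r} \<union> {r \<in> ?R. ?Q r}" by blast
  then have "card ?R = card {r \<in> ?R. \<not> ?Q r} + card {r \<in> ?R. ?Q r}"
    using fin by (metis (no_types, lifting) card_Un_disjoint disjoint_iff finite_Un mem_Collect_eq)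
  then have c: "real (card {r \<in> ?R. \<not> ?Q r}) = real (card ?R) - real (card {r \<in> ?R. ?Q r})" by simp
  have "S_coeff t n / T_coeff n = real (card {r \<in> ?R. \<not> ?Q r}) / real (card ?R)"
    unfolding S_coeff_def T_coeff_def by simp
  also have "\<dots> = 1 - real (card {r \<in> ?R. ?Q r}) / real (card ?R)"
    unfolding c using pos by (simp add: diff_divide_distrib)
  finally show ?thesis by simp
qed

lemma card_as_sum: "finite A \<Longrightarrow> real (card {x \<in> A. P x}) = (\<Sum>x\<in>A. if P x then 1 else 0)"
  by (simp add: sum.If_cases Int_def conj_commute)

lemma main_bound:
  assumes "n \<ge> 1" "L \<ge> 1" "\<And>t. t \<in> P \<Longrightarrow> L \<le> psize t"
  shows "(\<Sum>t\<in>P. 1 - S_coeff t n / T_coeff n) \<le> real n / real L"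
    "0 \<le> (\<Sum>t\<in>P. 1 - S_coeff t n / T_coeff n)"
proof -
  let ?R = "rec_trees n" and ?Q = "\<lambda>r t. \<exists>s. fringe r s \<and> shape s = t"
  have fin: "finite ?R" by (rule finite_rec)
  have cR: "real (card ?R) = fact (n - 1)" using card_rec[OF assms(1)] by simp
  have pos: "(fact (n - 1) :: real) > 0" by simp
  have "(\<Sum>t\<in>P. 1 - S_coeff t n / T_coeff n) \<le> real n / real L \<and> 0 \<le> (\<Sum>t\<in>P. 1 - S_coeff t n / T_coeff n)"
  proof (cases "finite P")
    case False then show ?thesis using assms by simp
  next
    case True
    have "(\<Sum>t\<in>P. 1 - S_coeff t n / T_coeff n) = (\<Sum>t\<in>P. real (card {r \<in> ?R. ?Q r t}) / fact (n - 1))"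
      using ratio_eq[OF assms(1)] cR by simp
    also have "\<dots> = (\<Sum>t\<in>P. \<Sum>r\<in>?R. if ?Q r t then 1 else 0) / fact (n - 1)"
      by (simp add: sum_divide_distrib card_as_sum[OF fin])
    also have "(\<Sum>t\<in>P. \<Sum>r\<in>?R. if ?Q r t then 1 else 0) = (\<Sum>r\<in>?R. \<Sum>t\<in>P. if ?Q r t then 1 else (0::real))"
      by (rule sum.swap)
    finally have eq: "(\<Sum>t\<in>P. 1 - S_coeff t n / T_coeff n) = (\<Sum>r\<in>?R. \<Sum>t\<in>P. if ?Q r t then 1 else (0::real)) / fact (n - 1)" .
    have "(\<Sum>r\<in>?R. \<Sum>t\<in>P. if ?Q r t then 1 else (0::real))
        \<le> (\<Sum>r\<in>?R. sum_mset (image_mset (\<lambda>s. if L \<le> lsize s then 1 else 0) (fr r)))"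
    proof (rule sum_mono)
      fix r assume "r \<in> ?R"
      have "(\<Sum>t\<in>P. if ?Q r t then 1 else (0::real)) = real (card {t \<in> P. ?Q r t})"
        by (rule card_as_sum[symmetric, OF True])
      also have "\<dots> \<le> sum_mset (image_mset (\<lambda>s. if L \<le> lsize s then 1 else 0) (fr r))"
        by (rule per_tree_bound) (rule assms(3))
      finally show "(\<Sum>t\<in>P. if ?Q r t then 1 else (0::real)) \<le> sum_mset (image_mset (\<lambda>s. if L \<le> lsize s then 1 else 0) (fr r))" .
    qed
    also have "\<dots> = W n (\<lambda>k. if L \<le> k then 1 else 0)" by (simp add: W_def)
    also have "\<dots> \<le> fact (n - 1) * (real n / real L)" by (rule G_formula[OF assms(1,2)])
    finally have le: "(\<Sum>r\<in>?R. \<Sum>t\<in>P. if ?Q r t then 1 else (0::real)) \<le> fact (n - 1) * (real n / real L)" .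
    have ge: "0 \<le> (\<Sum>r\<in>?R. \<Sum>t\<in>P. if ?Q r t then 1 else (0::real))" by (intro sum_nonneg) auto
    show ?thesis unfolding eq using le ge pos by (simp add: divide_le_eq mult.commute)
  qed
  then show "(\<Sum>t\<in>P. 1 - S_coeff t n / T_coeff n) \<le> real n / real L"
    "0 \<le> (\<Sum>t\<in>P. 1 - S_coeff t n / T_coeff n)" by auto
qed

theorem proposition2p7:
  shows "(\<lambda>n::nat. \<Sum>t\<in>{t. psize t \<le> n \<and> real (psize t) \<ge> log (1 / polya_sigma) (real n)}.
            1 - S_coeff t n / T_coeff n)
         \<in> O(\<lambda>n. real n / log (1 / polya_sigma) (real n))"
proof (rule bigoI[where c = 1])
  define b where "b = 1 / polya_sigma"
  have b1: "b > 1" using sigma_bounds unfolding b_def by (simp add: field_simps)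
  show "\<forall>\<^sub>F n in at_top. norm (\<Sum>t\<in>{t. psize t \<le> n \<and> real (psize t) \<ge> log (1 / polya_sigma) (real n)}.
            1 - S_coeff t n / T_coeff n) \<le> 1 * norm (real n / log (1 / polya_sigma) (real n))"
  proof (rule eventually_mono[OF eventually_ge_at_top[of 2]])
    fix n :: nat assume n2: "n \<ge> 2"
    let ?lg = "log b (real n)"
    let ?P = "{t. psize t \<le> n \<and> real (psize t) \<ge> ?lg}"
    have lgpos: "?lg > 0" using b1 n2 by simp
    define L where "L = nat \<lceil>?lg\<rceil>"
    have L1: "L \<ge> 1" using lgpos unfolding L_def by linarith
    have Llg: "real L \<ge> ?lg" unfolding L_def by linarith
    have PL: "L \<le> psize t" if "t \<in> ?P" for t
      using that unfolding L_def by (simp add: nat_le_iff ceiling_le_iff)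
    have ub: "(\<Sum>t\<in>?P. 1 - S_coeff t n / T_coeff n) \<le> real n / real L"
      and lb: "0 \<le> (\<Sum>t\<in>?P. 1 - S_coeff t n / T_coeff n)"
      using main_bound[of n L ?P] n2 L1 PL by auto
    have "real n / real L \<le> real n / ?lg"
      using lgpos Llg by (intro divide_left_mono) auto
    then show "norm (\<Sum>t\<in>{t. psize t \<le> n \<and> real (psize t) \<ge> log (1 / polya_sigma) (real n)}.
            1 - S_coeff t n / T_coeff n) \<le> 1 * norm (real n / log (1 / polya_sigma) (real n))"
      using ub lb lgpos unfolding b_def by simp
  qed
qed

end
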